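(* Let $d\ge 2$, $n\ge 1$ and $0\le k<n$ be integers, and let $\mathbb{Z}_d$ be the ring of integers modulo $d$. Let $\Lambda=\begin{pmatrix}0&I_n\\-I_n&0\end{pmatrix}$ and $\mathrm{Sp}(2n,\mathbb{Z}_d)=\{M\in M_{2n}(\mathbb{Z}_d): M^T\Lambda M=\Lambda\}$. Let $T(n,k,d)$ be the set of all $M\in \mathrm{Sp}(2n,\mathbb{Z}_d)$ which, in block form with respect to the partition of rows and columns into consecutive blocks of sizes $(n-k,\,k,\,n-k,\,k)$, have the form $$M=\begin{pmatrix}(A^T)^{-1}&0&0&0\\ M_{21}&M_{22}&0&M_{24}\\ M_{31}&M_{32}&A&M_{34}\\ M_{41}&M_{42}&0&M_{44}\end{pmatrix}$$ for some invertible $A\in \mathrm{GL}(n-k,\mathbb{Z}_d)$ and arbitrary blocks $M_{ij}$ of the appropriate sizes (when $k=0$ this reads $M=\begin{pmatrix}(A^T)^{-1}&0\\ M_{31}&A\end{pmatrix}$). Then $T(n,k,d)$ is a subgroup of $\mathrm{Sp}(2n,\mathbb{Z}_d)$.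
   Context: All matrix arithmetic is over the ring $\mathbb{Z}_d$ (which need not be a field). $I_m$ denotes the $m\times m$ identity matrix and $\mathrm{GL}(m,\mathbb{Z}_d)$ the group of invertible $m\times m$ matrices over $\mathbb{Z}_d$. *)

theory Defs
  imports "Jordan_Normal_Form.Matrix" "Berlekamp_Zassenhaus.Finite_Field"
begin

text \<open>The ring Z_d is modelled as the type 'd mod_ring with d = CARD('d) > 1
  (class nontriv); matrices are Jordan_Normal_Form matrices over it.\<close>

definition Lambda :: "nat \<Rightarrow> 'd::nontriv mod_ring mat" where
  "Lambda n = four_block_mat (0\<^sub>m n n) (1\<^sub>m n) (- 1\<^sub>m n) (0\<^sub>m n n)"

definition Sp :: "nat \<Rightarrow> 'd::nontriv mod_ring mat set" where
  "Sp n = {M \<in> carrier_mat (2*n) (2*n). transpose_mat M * Lambda n * M = Lambda n}"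

definition Sp_group :: "nat \<Rightarrow> 'd::nontriv mod_ring mat monoid" where
  "Sp_group n = \<lparr>carrier = Sp n, mult = (*), one = 1\<^sub>m (2*n)\<rparr>"

text \<open>T(n,k,d): block rows/columns of sizes (n-k, k, n-k, k), i.e. index ranges
  [0,n-k), [n-k,n), [n,2n-k), [2n-k,2n).  First block row is ((A^T)^{-1},0,0,0)
  (with B = (A^T)^{-1}), third block column is (0,0,A,0)^T; everything else arbitrary.\<close>
definition T_set :: "nat \<Rightarrow> nat \<Rightarrow> 'd::nontriv mod_ring mat set" where
  "T_set n k = {M \<in> Sp n. \<exists>A B.
     A \<in> carrier_mat (n-k) (n-k) \<and> B \<in> carrier_mat (n-k) (n-k) \<and>
     B * transpose_mat A = 1\<^sub>m (n-k) \<and> transpose_mat A * B = 1\<^sub>m (n-k) \<and>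
     (\<forall>i<2*n. \<forall>j<2*n.
        (i < n-k \<longrightarrow> M $$ (i,j) = (if j < n-k then B $$ (i,j) else 0)) \<and>
        (n \<le> j \<and> j < 2*n-k \<longrightarrow>
           M $$ (i,j) = (if n \<le> i \<and> i < 2*n-k then A $$ (i-n, j-n) else 0)))}"

end

theory Submission
  imports Defs "Jordan_Normal_Form.Determinant"
begin

lemma prod_entry:
  fixes M N :: "'a::comm_ring_1 mat"
  assumes "M \<in> carrier_mat m m" "N \<in> carrier_mat m m" "i < m" "j < m"
  shows "(M*N)$$(i,j) = (\<Sum>l<m. M$$(i,l) * N$$(l,j))"
  using assms by (auto simp: scalar_prod_def atLeast0LessThan intro!: sum.cong)

lemma sum_restrict:
  fixes f :: "nat \<Rightarrow> 'a::comm_monoid_add"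
  assumes "S \<subseteq> {..<m}" "\<And>l. l < m \<Longrightarrow> l \<notin> S \<Longrightarrow> f l = 0"
  shows "(\<Sum>l<m. f l) = (\<Sum>l\<in>S. f l)"
  using assms by (intro sum.mono_neutral_left[symmetric]) (auto intro: finite_subset)

lemma sum_shift:
  fixes f :: "nat \<Rightarrow> 'a::comm_monoid_add"
  shows "(\<Sum>l\<in>{n..<n+p}. f l) = (\<Sum>l<p. f (l+n))"
  using sum.shift_bounds_nat_ivl[of f 0 n p] by (simp add: atLeast0LessThan add.commute)

lemma Lambda_carrier: "Lambda n \<in> carrier_mat (2*n) (2*n)"
  unfolding Lambda_def by (metis four_block_carrier_mat mult_2 one_carrier_mat zero_carrier_mat)

lemma Lambda_dims[simp]: "dim_row (Lambda n) = 2*n" "dim_col (Lambda n) = 2*n"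
  using Lambda_carrier[of n] by auto

lemma Lambda_entry: "i < 2*n \<Longrightarrow> j < 2*n \<Longrightarrow> (Lambda n :: 'd::nontriv mod_ring mat) $$ (i,j) =
   (if i < n \<and> j = i + n then 1 else if i \<ge> n \<and> i = j + n then -1 else 0)"
  unfolding Lambda_def by auto

lemma Lambda_left:
  assumes X: "X \<in> carrier_mat (2*n) (2*n)" and ij: "i < 2*n" "j < 2*n"
  shows "(Lambda n * X) $$ (i,j) = (if i < n then X$$(i+n,j) else - X$$(i-n,j))"
proof -
  have "(Lambda n * X) $$ (i,j) = (\<Sum>l<2*n. Lambda n $$(i,l) * X$$(l,j))"
    using prod_entry[OF Lambda_carrier X ij] .
  also have "\<dots> = (\<Sum>l<2*n. if l = (if i < n then i+n else i-n) then (if i < n then X$$(i+n,j) else - X$$(i-n,j)) else 0)"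
    using ij by (intro sum.cong) (auto simp: Lambda_entry)
  also have "\<dots> = (if i < n then X$$(i+n,j) else - X$$(i-n,j))"
    using ij by (subst sum.delta) auto
  finally show ?thesis .
qed

lemma Lambda_right:
  assumes X: "X \<in> carrier_mat (2*n) (2*n)" and ij: "i < 2*n" "j < 2*n"
  shows "(X * Lambda n) $$ (i,j) = (if j < n then - X$$(i,j+n) else X$$(i,j-n))"
proof -
  have "(X * Lambda n) $$ (i,j) = (\<Sum>l<2*n. X$$(i,l) * Lambda n $$(l,j))"
    using prod_entry[OF X Lambda_carrier ij] .
  also have "\<dots> = (\<Sum>l<2*n. if l = (if j < n then j+n else j-n) then (if j < n then - X$$(i,j+n) else X$$(i,j-n)) else 0)"
    using ij by (intro sum.cong) (auto simp: Lambda_entry)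
  also have "\<dots> = (if j < n then - X$$(i,j+n) else X$$(i,j-n))"
    using ij by (subst sum.delta) auto
  finally show ?thesis .
qed

definition Tstr :: "nat \<Rightarrow> nat \<Rightarrow> 'a::comm_ring_1 mat \<Rightarrow> 'a mat \<Rightarrow> 'a mat \<Rightarrow> bool" where
  "Tstr n k M A B = (\<forall>i<2*n. \<forall>j<2*n.
        (i < n-k \<longrightarrow> M $$ (i,j) = (if j < n-k then B $$ (i,j) else 0)) \<and>
        (n \<le> j \<and> j < 2*n-k \<longrightarrow>
           M $$ (i,j) = (if n \<le> i \<and> i < 2*n-k then A $$ (i-n, j-n) else 0)))"

lemma T_set_iff: "M \<in> T_set n k \<longleftrightarrow> M \<in> Sp n \<and> (\<exists>A B.
     A \<in> carrier_mat (n-k) (n-k) \<and> B \<in> carrier_mat (n-k) (n-k) \<and>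
     B * transpose_mat A = 1\<^sub>m (n-k) \<and> transpose_mat A * B = 1\<^sub>m (n-k) \<and> Tstr n k M A B)"
  unfolding T_set_def Tstr_def by simp

lemma Tstr_mult:
  fixes M N :: "'a::comm_ring_1 mat"
  assumes M: "M \<in> carrier_mat (2*n) (2*n)" and N: "N \<in> carrier_mat (2*n) (2*n)"
    and A1: "A1 \<in> carrier_mat (n-k) (n-k)" and A2: "A2 \<in> carrier_mat (n-k) (n-k)"
    and B1: "B1 \<in> carrier_mat (n-k) (n-k)" and B2: "B2 \<in> carrier_mat (n-k) (n-k)"
    and TM: "Tstr n k M A1 B1" and TN: "Tstr n k N A2 B2" and k: "k < n"
  shows "Tstr n k (M*N) (A1*A2) (B1*B2)"
  unfolding Tstr_def
proof (intro allI impI conjI)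
  fix i j assume i: "i < 2*n" and j: "j < 2*n"
  define p where "p = n - k"
  have np: "2*n-k = n+p" using k by (simp add: p_def)
  have eM: "M $$ (i,j) = (if j < p then B1 $$ (i,j) else 0)" if "i < p" "i < 2*n" "j < 2*n" for i j
    using TM that unfolding Tstr_def p_def by blast
  have eN: "N $$ (i,j) = (if j < p then B2 $$ (i,j) else 0)" if "i < p" "i < 2*n" "j < 2*n" for i j
    using TN that unfolding Tstr_def p_def by blast
  have cM: "M $$ (i,j) = (if n \<le> i \<and> i < n+p then A1 $$ (i-n, j-n) else 0)"
    if "n \<le> j" "j < n+p" "i < 2*n" "j < 2*n" for i j
    using TM that np unfolding Tstr_def p_def by auto
  have cN: "N $$ (i,j) = (if n \<le> i \<and> i < n+p then A2 $$ (i-n, j-n) else 0)"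
    if "n \<le> j" "j < n+p" "i < 2*n" "j < 2*n" for i j
    using TN that np unfolding Tstr_def p_def by auto
  have pn: "p \<le> n" by (simp add: p_def)
  {
    assume ip: "i < n-k"
    hence ip: "i < p" by (simp add: p_def)
    have "(M*N) $$ (i,j) = (\<Sum>l<2*n. M$$(i,l) * N$$(l,j))" using prod_entry[OF M N i j] .
    also have "\<dots> = (\<Sum>l\<in>{..<p}. M$$(i,l) * N$$(l,j))"
      using pn ip i by (intro sum_restrict) (auto simp: eM)
    also have "\<dots> = (\<Sum>l<p. B1$$(i,l) * N$$(l,j))"
      using pn ip i by (intro sum.cong) (auto simp: eM)
    also have "\<dots> = (if j < p then (B1*B2) $$ (i,j) else 0)"
    proof (cases "j < p")
      case True
      then show ?thesis using prod_entry[OF B1 B2, of i j] ip pn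
        by (auto simp: p_def eN intro!: sum.cong)
    next
      case False
      then show ?thesis using pn j by (auto simp: eN intro!: sum.neutral)
    qed
    finally show "(M*N) $$ (i,j) = (if j < n-k then (B1*B2) $$ (i,j) else 0)" by (simp add: p_def)
  }
  {
    assume jj: "n \<le> j \<and> j < 2*n-k"
    hence jj: "n \<le> j" "j < n+p" using np by auto
    have "(M*N) $$ (i,j) = (\<Sum>l<2*n. M$$(i,l) * N$$(l,j))" using prod_entry[OF M N i j] .
    also have "\<dots> = (\<Sum>l\<in>{n..<n+p}. M$$(i,l) * N$$(l,j))"
      using pn jj j by (intro sum_restrict) (auto simp: cN)
    also have "\<dots> = (\<Sum>l<p. M$$(i,l+n) * N$$(l+n,j))" by (rule sum_shift)
    also have "\<dots> = (\<Sum>l<p. M$$(i,l+n) * A2$$(l,j-n))"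
      using pn jj j by (intro sum.cong) (auto simp: cN)
    also have "\<dots> = (if n \<le> i \<and> i < n+p then (A1*A2) $$ (i-n,j-n) else 0)"
    proof (cases "n \<le> i \<and> i < n+p")
      case True
      then show ?thesis using prod_entry[OF A1 A2, of "i-n" "j-n"] jj pn i
        by (auto simp: p_def cM intro!: sum.cong)
    next
      case False
      then show ?thesis using pn i by (auto simp: cM intro!: sum.neutral)
    qed
    finally show "(M*N) $$ (i,j) = (if n \<le> i \<and> i < 2*n-k then (A1*A2) $$ (i-n,j-n) else 0)"
      using np by simp
  }
qed


lemma left_right_inv:
  fixes M N :: "'a::comm_ring_1 mat"
  assumes M: "M \<in> carrier_mat m m" and N: "N \<in> carrier_mat m m" and NM: "N * M = 1\<^sub>m m"
  shows "M * N = 1\<^sub>m m"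
proof -
  have d: "det N * det M = 1" using det_mult[OF N M] NM by simp
  define R where "R = det N \<cdot>\<^sub>m adj_mat M"
  have R: "R \<in> carrier_mat m m" using adj_mat(1)[OF M] by (simp add: R_def)
  have MR: "M * R = 1\<^sub>m m" unfolding R_def
    using mult_smult_distrib[OF M adj_mat(1)[OF M]] adj_mat(2)[OF M] d
    by (auto intro!: eq_matI simp: mult.assoc[symmetric])
  have "N = N * (M * R)" using MR N by simp
  also have "\<dots> = (N * M) * R" using N M R by (simp add: assoc_mult_mat)
  also have "\<dots> = R" using NM R by simp
  finally show ?thesis using MR by simp
qed

lemma LambdaT_left:
  assumes X: "X \<in> carrier_mat (2*n) (2*n)" and ij: "i < 2*n" "j < 2*n"
  shows "(transpose_mat (Lambda n) * X) $$ (i,j) = (if i < n then - X$$(i+n,j) else X$$(i-n,j))"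
proof -
  have LT: "transpose_mat (Lambda n) \<in> carrier_mat (2*n) (2*n)" using Lambda_carrier by simp
  have "(transpose_mat (Lambda n) * X) $$ (i,j) = (\<Sum>l<2*n. transpose_mat (Lambda n) $$(i,l) * X$$(l,j))"
    using prod_entry[OF LT X ij] .
  also have "\<dots> = (\<Sum>l<2*n. if l = (if i < n then i+n else i-n) then (if i < n then - X$$(i+n,j) else X$$(i-n,j)) else 0)"
    using ij Lambda_carrier by (intro sum.cong) (auto simp: Lambda_entry)
  also have "\<dots> = (if i < n then - X$$(i+n,j) else X$$(i-n,j))"
    using ij by (subst sum.delta) auto
  finally show ?thesis .
qed

lemma LambdaT_Lambda: "transpose_mat (Lambda n) * Lambda n = (1\<^sub>m (2*n) :: 'd::nontriv mod_ring mat)"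
proof (rule eq_matI)
  fix i j assume ij: "i < dim_row (1\<^sub>m (2*n) :: 'd mod_ring mat)" "j < dim_col (1\<^sub>m (2*n) :: 'd mod_ring mat)"
  then show "(transpose_mat (Lambda n) * Lambda n) $$ (i,j) = (1\<^sub>m (2*n) :: 'd mod_ring mat) $$ (i,j)"
    by (subst LambdaT_left[OF Lambda_carrier]) (auto simp: Lambda_entry)
qed auto

definition Ninv :: "nat \<Rightarrow> 'd::nontriv mod_ring mat \<Rightarrow> 'd mod_ring mat" where
  "Ninv n M = transpose_mat (Lambda n) * transpose_mat M * Lambda n"

lemma Ninv_carrier: "M \<in> carrier_mat (2*n) (2*n) \<Longrightarrow> Ninv n M \<in> carrier_mat (2*n) (2*n)"
  unfolding Ninv_def using Lambda_carrier[of n]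
  by (intro mult_carrier_mat[of _ "2*n" "2*n"]) auto

lemma Ninv_entry:
  assumes M: "M \<in> carrier_mat (2*n) (2*n)" and ij: "i < 2*n" "j < 2*n"
  shows "Ninv n M $$ (i,j) = (if i<n then (if j<n then M$$(j+n,i+n) else - M$$(j-n,i+n))
      else (if j<n then - M$$(j+n,i-n) else M$$(j-n,i-n)))"
proof -
  have MT: "transpose_mat M \<in> carrier_mat (2*n) (2*n)" using M by simp
  have Y: "transpose_mat M * Lambda n \<in> carrier_mat (2*n) (2*n)" using MT Lambda_carrier[of n]
    by (intro mult_carrier_mat[of _ "2*n" "2*n"]) auto
  have "Ninv n M = transpose_mat (Lambda n) * (transpose_mat M * Lambda n)"
    unfolding Ninv_def using MT Lambda_carrier[of n]
    by (intro assoc_mult_mat[of _ "2*n" "2*n"]) auto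
  have e: "(transpose_mat M * Lambda n) $$ (a,b) = (if b < n then - M$$(b+n,a) else M$$(b-n,a))"
    if "a < 2*n" "b < 2*n" for a b
    using that M by (subst Lambda_right[OF MT]) auto
  show ?thesis unfolding \<open>Ninv n M = _\<close> 
    using ij by (subst LambdaT_left[OF Y ij]) (auto simp: e)
qed

lemma Sp_inv:
  assumes M: "M \<in> Sp n"
  shows "Ninv n M \<in> Sp n" "Ninv n M * M = 1\<^sub>m (2*n)" "M * Ninv n M = 1\<^sub>m (2*n)"
proof -
  have Mc: "M \<in> carrier_mat (2*n) (2*n)" and S: "transpose_mat M * Lambda n * M = Lambda n"
    using M by (auto simp: Sp_def)
  have L: "Lambda n \<in> carrier_mat (2*n) (2*n)" by (rule Lambda_carrier)
  have Nc: "Ninv n M \<in> carrier_mat (2*n) (2*n)" by (rule Ninv_carrier[OF Mc])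
  have MT: "transpose_mat M \<in> carrier_mat (2*n) (2*n)" using Mc by simp
  have LT: "transpose_mat (Lambda n) \<in> carrier_mat (2*n) (2*n)" using L by simp
  have MLc: "transpose_mat M * Lambda n \<in> carrier_mat (2*n) (2*n)" using mult_carrier_mat[OF MT L] .
  have "Ninv n M * M = transpose_mat (Lambda n) * (transpose_mat M * Lambda n) * M"
    unfolding Ninv_def using assoc_mult_mat[OF LT MT L] by simp
  also have "\<dots> = transpose_mat (Lambda n) * (transpose_mat M * Lambda n * M)"
    using assoc_mult_mat[OF LT MLc Mc] .
  also have "\<dots> = 1\<^sub>m (2*n)" using S LambdaT_Lambda by simp
  finally show NM: "Ninv n M * M = 1\<^sub>m (2*n)" .
  show MN: "M * Ninv n M = 1\<^sub>m (2*n)" by (rule left_right_inv[OF Mc Nc NM])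
  have "transpose_mat (Ninv n M) * Lambda n * Ninv n M
      = transpose_mat (Ninv n M) * (transpose_mat M * Lambda n * M) * Ninv n M" using S by simp
  also have "\<dots> = transpose_mat (M * Ninv n M) * Lambda n * (M * Ninv n M)"
  proof -
    have NT: "transpose_mat (Ninv n M) \<in> carrier_mat (2*n) (2*n)" using Nc by simp
    have LM: "Lambda n * M \<in> carrier_mat (2*n) (2*n)" using mult_carrier_mat[OF L Mc] .
    have NM': "transpose_mat (Ninv n M) * transpose_mat M \<in> carrier_mat (2*n) (2*n)"
      using mult_carrier_mat[OF NT MT] .
    have MN': "M * Ninv n M \<in> carrier_mat (2*n) (2*n)" using mult_carrier_mat[OF Mc Nc] .
    have "transpose_mat (Ninv n M) * (transpose_mat M * Lambda n * M) * Ninv n M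
       = (transpose_mat (Ninv n M) * transpose_mat M) * ((Lambda n * M) * Ninv n M)"
      using assoc_mult_mat[OF MT L Mc] assoc_mult_mat[OF NT MT LM] assoc_mult_mat[OF NM' LM Nc] by simp
    also have "\<dots> = (transpose_mat (Ninv n M) * transpose_mat M) * Lambda n * (M * Ninv n M)"
      using assoc_mult_mat[OF L Mc Nc] assoc_mult_mat[OF NM' L MN'] by simp
    finally show ?thesis using transpose_mult[OF Mc Nc] by simp
  qed
  also have "\<dots> = Lambda n" using MN L by simp
  finally show "Ninv n M \<in> Sp n" using Nc by (simp add: Sp_def)
qed


lemma Tstr_inv:
  fixes M :: "'d::nontriv mod_ring mat"
  assumes M: "M \<in> carrier_mat (2*n) (2*n)" and TM: "Tstr n k M A B" and k: "k < n"
    and A: "A \<in> carrier_mat (n-k) (n-k)" and B: "B \<in> carrier_mat (n-k) (n-k)"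
  shows "Tstr n k (Ninv n M) (transpose_mat B) (transpose_mat A)"
  unfolding Tstr_def
proof (intro allI impI conjI)
  fix i j assume i: "i < 2*n" and j: "j < 2*n"
  define p where "p = n - k"
  have np: "2*n-k = n+p" using k by (simp add: p_def)
  have pn: "p \<le> n" by (simp add: p_def)
  have eM: "M $$ (i,j) = (if j < p then B $$ (i,j) else 0)" if "i < p" "i < 2*n" "j < 2*n" for i j
    using TM that unfolding Tstr_def p_def by blast
  have cM: "M $$ (i,j) = (if n \<le> i \<and> i < n+p then A $$ (i-n, j-n) else 0)"
    if "n \<le> j" "j < n+p" "i < 2*n" "j < 2*n" for i j
    using TM that np unfolding Tstr_def p_def by auto
  have Ad: "dim_row A = p" "dim_col A = p" using A by (auto simp: p_def)
  have Bd: "dim_row B = p" "dim_col B = p" using B by (auto simp: p_def)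
  {
    assume "i < n-k"
    hence ip: "i < p" by (simp add: p_def)
    have "Ninv n M $$ (i,j) = (if j < p then transpose_mat A $$ (i,j) else 0)"
    proof (cases "j < n")
      case True
      then show ?thesis using Ninv_entry[OF M i j] ip pn cM[of "i+n" "j+n"] j Ad
        by auto
    next
      case False
      then show ?thesis using Ninv_entry[OF M i j] ip pn cM[of "i+n" "j-n"] j
        by auto
    qed
    then show "Ninv n M $$ (i,j) = (if j < n-k then transpose_mat A $$ (i,j) else 0)"
      by (simp add: p_def)
  }
  {
    assume "n \<le> j \<and> j < 2*n-k"
    hence jj: "n \<le> j" "j < n+p" using np by auto
    have "Ninv n M $$ (i,j) = (if n \<le> i \<and> i < n+p then transpose_mat B $$ (i-n,j-n) else 0)"
    proof (cases "i < n")
      case True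
      then show ?thesis using Ninv_entry[OF M i j] jj pn eM[of "j-n" "i+n"] i
        by auto
    next
      case False
      then show ?thesis using Ninv_entry[OF M i j] jj pn eM[of "j-n" "i-n"] i Bd
        by auto
    qed
    then show "Ninv n M $$ (i,j) = (if n \<le> i \<and> i < 2*n-k then transpose_mat B $$ (i-n,j-n) else 0)"
      using np by simp
  }
qed


lemma Sp_mult:
  assumes X: "X \<in> Sp n" and Y: "Y \<in> Sp n"
  shows "X * Y \<in> Sp n"
proof -
  have Xc: "X \<in> carrier_mat (2*n) (2*n)" and SX: "transpose_mat X * Lambda n * X = Lambda n"
    using X by (auto simp: Sp_def)
  have Yc: "Y \<in> carrier_mat (2*n) (2*n)" and SY: "transpose_mat Y * Lambda n * Y = Lambda n"
    using Y by (auto simp: Sp_def)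
  have L: "Lambda n \<in> carrier_mat (2*n) (2*n)" by (rule Lambda_carrier)
  have XT: "transpose_mat X \<in> carrier_mat (2*n) (2*n)" using Xc by simp
  have YT: "transpose_mat Y \<in> carrier_mat (2*n) (2*n)" using Yc by simp
  have XL: "transpose_mat X * Lambda n \<in> carrier_mat (2*n) (2*n)" using mult_carrier_mat[OF XT L] .
  have XLX: "transpose_mat X * Lambda n * X \<in> carrier_mat (2*n) (2*n)" using mult_carrier_mat[OF XL Xc] .
  have YXL: "transpose_mat Y * (transpose_mat X * Lambda n) \<in> carrier_mat (2*n) (2*n)"
    using mult_carrier_mat[OF YT XL] .
  have "transpose_mat (X * Y) * Lambda n * (X * Y) = transpose_mat Y * transpose_mat X * Lambda n * (X * Y)"
    using transpose_mult[OF Xc Yc] by simp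
  also have "\<dots> = transpose_mat Y * (transpose_mat X * Lambda n) * (X * Y)"
    using assoc_mult_mat[OF YT XT L] by simp
  also have "\<dots> = transpose_mat Y * (transpose_mat X * Lambda n) * X * Y"
    using assoc_mult_mat[OF YXL Xc Yc] by simp
  also have "\<dots> = transpose_mat Y * (transpose_mat X * Lambda n * X) * Y"
    using assoc_mult_mat[OF YT XL Xc] by simp
  also have "\<dots> = Lambda n" using SX SY by simp
  finally show ?thesis using mult_carrier_mat[OF Xc Yc] by (simp add: Sp_def)
qed

lemma AB_mult:
  fixes A1 :: "'a::comm_ring_1 mat"
  assumes A1: "A1 \<in> carrier_mat p p" and A2: "A2 \<in> carrier_mat p p"
    and B1: "B1 \<in> carrier_mat p p" and B2: "B2 \<in> carrier_mat p p"
    and h1: "B1 * transpose_mat A1 = 1\<^sub>m p" "transpose_mat A1 * B1 = 1\<^sub>m p"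
    and h2: "B2 * transpose_mat A2 = 1\<^sub>m p" "transpose_mat A2 * B2 = 1\<^sub>m p"
  shows "(B1*B2) * transpose_mat (A1*A2) = 1\<^sub>m p" "transpose_mat (A1*A2) * (B1*B2) = 1\<^sub>m p"
proof -
  have T1: "transpose_mat A1 \<in> carrier_mat p p" using A1 by simp
  have T2: "transpose_mat A2 \<in> carrier_mat p p" using A2 by simp
  have "(B1*B2) * transpose_mat (A1*A2) = (B1*B2) * (transpose_mat A2 * transpose_mat A1)"
    using transpose_mult[OF A1 A2] by simp
  also have "\<dots> = B1 * (B2 * transpose_mat A2) * transpose_mat A1"
    using assoc_mult_mat[OF B1 B2 mult_carrier_mat[OF T2 T1]] assoc_mult_mat[OF B2 T2 T1]
      assoc_mult_mat[OF B1 mult_carrier_mat[OF B2 T2] T1] by simp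
  also have "\<dots> = 1\<^sub>m p" using h1 h2 B1 by simp
  finally show "(B1*B2) * transpose_mat (A1*A2) = 1\<^sub>m p" .
  have "transpose_mat (A1*A2) * (B1*B2) = (transpose_mat A2 * transpose_mat A1) * (B1*B2)"
    using transpose_mult[OF A1 A2] by simp
  also have "\<dots> = transpose_mat A2 * (transpose_mat A1 * B1) * B2"
    using assoc_mult_mat[OF T2 T1 mult_carrier_mat[OF B1 B2]] assoc_mult_mat[OF T1 B1 B2]
      assoc_mult_mat[OF T2 mult_carrier_mat[OF T1 B1] B2] by simp
  also have "\<dots> = 1\<^sub>m p" using h1 h2 T2 by simp
  finally show "transpose_mat (A1*A2) * (B1*B2) = 1\<^sub>m p" .
qed

theorem theorem1:
  fixes n k :: nat
  assumes "n \<ge> 1" and "k < n"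
  shows "subgroup (T_set n k :: 'd::nontriv mod_ring mat set) (Sp_group n)"
proof (rule subgroup.intro)
  show "T_set n k \<subseteq> carrier (Sp_group n)" by (auto simp: T_set_def Sp_group_def)
next
  fix x y :: "'d mod_ring mat"
  assume x: "x \<in> T_set n k" and y: "y \<in> T_set n k"
  from x obtain A1 B1 where xS: "x \<in> Sp n" and A1: "A1 \<in> carrier_mat (n-k) (n-k)"
    and B1: "B1 \<in> carrier_mat (n-k) (n-k)" and h1: "B1 * transpose_mat A1 = 1\<^sub>m (n-k)"
    "transpose_mat A1 * B1 = 1\<^sub>m (n-k)" and t1: "Tstr n k x A1 B1"
    unfolding T_set_iff by blast
  from y obtain A2 B2 where yS: "y \<in> Sp n" and A2: "A2 \<in> carrier_mat (n-k) (n-k)"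
    and B2: "B2 \<in> carrier_mat (n-k) (n-k)" and h2: "B2 * transpose_mat A2 = 1\<^sub>m (n-k)"
    "transpose_mat A2 * B2 = 1\<^sub>m (n-k)" and t2: "Tstr n k y A2 B2"
    unfolding T_set_iff by blast
  have xc: "x \<in> carrier_mat (2*n) (2*n)" using xS by (simp add: Sp_def)
  have yc: "y \<in> carrier_mat (2*n) (2*n)" using yS by (simp add: Sp_def)
  have "x * y \<in> T_set n k"
    unfolding T_set_iff
    using Sp_mult[OF xS yS] mult_carrier_mat[OF A1 A2] mult_carrier_mat[OF B1 B2]
      AB_mult[OF A1 A2 B1 B2 h1 h2] Tstr_mult[OF xc yc A1 A2 B1 B2 t1 t2 assms(2)] by blast
  then show "x \<otimes>\<^bsub>Sp_group n\<^esub> y \<in> (T_set n k :: 'd mod_ring mat set)" by (simp add: Sp_group_def)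
next
  have S1: "1\<^sub>m (2*n) \<in> (Sp n :: 'd mod_ring mat set)"
    using Lambda_carrier[of n] by (simp add: Sp_def)
  have "Tstr n k (1\<^sub>m (2*n) :: 'd mod_ring mat) (1\<^sub>m (n-k)) (1\<^sub>m (n-k))"
    unfolding Tstr_def using assms(2) by auto
  then have "(1\<^sub>m (2*n) :: 'd mod_ring mat) \<in> T_set n k"
    unfolding T_set_iff using S1 by (intro conjI exI[of _ "1\<^sub>m (n-k)"]) auto
  then show "\<one>\<^bsub>Sp_group n\<^esub> \<in> (T_set n k :: 'd mod_ring mat set)" by (simp add: Sp_group_def)
next
  fix x :: "'d mod_ring mat"
  assume x: "x \<in> T_set n k"
  from x obtain A B where xS: "x \<in> Sp n" and A: "A \<in> carrier_mat (n-k) (n-k)"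
    and B: "B \<in> carrier_mat (n-k) (n-k)" and h: "B * transpose_mat A = 1\<^sub>m (n-k)"
    "transpose_mat A * B = 1\<^sub>m (n-k)" and t: "Tstr n k x A B"
    unfolding T_set_iff by blast
  have xc: "x \<in> carrier_mat (2*n) (2*n)" using xS by (simp add: Sp_def)
  have NT: "Ninv n x \<in> T_set n k"
    unfolding T_set_iff
    using Sp_inv(1)[OF xS] Tstr_inv[OF xc t assms(2) A B] A B h
    by (intro conjI exI[of _ "transpose_mat B"] exI[of _ "transpose_mat A"]) auto
  have "inv\<^bsub>Sp_group n\<^esub> x = Ninv n x"
    unfolding m_inv_def Sp_group_def
  proof (simp, rule the_equality)
    show "Ninv n x \<in> Sp n \<and> x * Ninv n x = 1\<^sub>m (2 * n) \<and> Ninv n x * x = 1\<^sub>m (2 * n)"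
      using Sp_inv[OF xS] by simp
  next
    fix y assume y: "y \<in> Sp n \<and> x * y = 1\<^sub>m (2 * n) \<and> y * x = 1\<^sub>m (2 * n)"
    have yc: "y \<in> carrier_mat (2*n) (2*n)" using y by (simp add: Sp_def)
    have Nc: "Ninv n x \<in> carrier_mat (2*n) (2*n)" using Ninv_carrier[OF xc] .
    have "y = y * (x * Ninv n x)" using Sp_inv(3)[OF xS] yc by simp
    also have "\<dots> = (y * x) * Ninv n x" using assoc_mult_mat[OF yc xc Nc] by simp
    also have "\<dots> = Ninv n x" using y Nc by simp
    finally show "y = Ninv n x" .
  qed
  then show "inv\<^bsub>Sp_group n\<^esub> x \<in> (T_set n k :: 'd mod_ring mat set)" using NT by simp
qed

end
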